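(* For any $m\in\mathbb Z_{\ge1}$, \[\sum_{b=0}^m\sum_{z=0}^{\lfloor (m-b)/2\rfloor}\eta_2(z,b)\,\chi^{\operatorname{Sp}(2m)}_{(2^{m-b-2z},1^{2z})}=\sum_{\ell=0}^{\lfloor m/2\rfloor}\binom{2\ell}{\ell}\sum_{1\le i_1<\cdots<i_{m-2\ell}\le m}\ \prod_{j=1}^{m-2\ell}(x_{i_j}^2+x_{i_j}^{-2})=\sum_{j=0}^{\lfloor m/2\rfloor}\chi^{\operatorname{Sp}(2m)}_{(1^{m-2j})}(x_1^{\pm2},\dots,x_m^{\pm2}).\]
   Context: $\chi_\lambda^{\operatorname{Sp}(2m)}(y_1^{\pm1},\dots,y_m^{\pm1})$ is the character of the irreducible representation of $\operatorname{Sp}(2m,\mathbb C)$ with highest weight the partition $\lambda$, evaluated at a torus element with eigenvalues $y_1^{\pm1},\dots,y_m^{\pm1}$; when the arguments are omitted they are $x_1^{\pm1},\dots,x_m^{\pm1}$. $(2^c,1^d)$ denotes the partition with $c$ parts equal to $2$ followed by $d$ parts equal to $1$; $(1^k)$ has $k$ parts equal to $1$; $\chi_\emptyset=1$. $\eta_2(z,b)=-(b+1)/2$ if $b$ is odd and $\eta_2(z,b)=b/2+\delta(z\text{ even})$ if $b$ is even, where $\delta(P)$ is $1$ if $P$ holds and $0$ otherwise. The inner sum over $1\le i_1<\cdots<i_k\le m$ is $1$ when $k=0$. *)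

theory Defs
  imports Complex_Main "HOL-Combinatorics.Permutations"
begin

definition det_n :: "nat \<Rightarrow> (nat \<Rightarrow> nat \<Rightarrow> complex) \<Rightarrow> complex" where
  "det_n m M = (\<Sum>p | p permutes {1..m}. of_int (sign p) * (\<Prod>i\<in>{1..m}. M i (p i)))"

text \<open>Partitions are functions nat => nat giving the parts lam 1 >= lam 2 >= ... (parts beyond
  the length are 0).  Weyl character formula for Sp(2m):
  chi_lam(x_1^{+-1},...,x_m^{+-1}) =
    det(x_j^{lam_i+m-i+1} - x_j^{-(lam_i+m-i+1)}) / det(x_j^{m-i+1} - x_j^{-(m-i+1)}).\<close>
definition sp_num :: "nat \<Rightarrow> (nat \<Rightarrow> nat) \<Rightarrow> (nat \<Rightarrow> complex) \<Rightarrow> complex" where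
  "sp_num m lam y = det_n m (\<lambda>i j. y j ^ (lam i + m - i + 1) - inverse (y j ^ (lam i + m - i + 1)))"

definition sp_den :: "nat \<Rightarrow> (nat \<Rightarrow> complex) \<Rightarrow> complex" where
  "sp_den m y = sp_num m (\<lambda>_. 0) y"

definition sp_char :: "nat \<Rightarrow> (nat \<Rightarrow> nat) \<Rightarrow> (nat \<Rightarrow> complex) \<Rightarrow> complex" where
  "sp_char m lam y = sp_num m lam y / sp_den m y"

definition part21 :: "nat \<Rightarrow> nat \<Rightarrow> nat \<Rightarrow> nat" where
  "part21 c d i = (if 1 \<le> i \<and> i \<le> c then 2 else if c < i \<and> i \<le> c + d then 1 else 0)"

definition part1 :: "nat \<Rightarrow> nat \<Rightarrow> nat" where
  "part1 k i = (if 1 \<le> i \<and> i \<le> k then 1 else 0)"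

definition eta2 :: "nat \<Rightarrow> nat \<Rightarrow> int" where
  "eta2 z b = (if odd b then - (int b + 1) div 2 else int b div 2 + (if even z then 1 else 0))"

end

theory Submission
  imports Defs "Jordan_Normal_Form.Determinant" "HOL-Computational_Algebra.Formal_Laurent_Series"
begin


lemma det_n_conv: "det_n n M = det (mat n n (\<lambda>(i,j). M (Suc i) (Suc j)))"
proof -
  let ?A = "{0..<n}" and ?B = "{1..n}"
  have bij: "bij_betw Suc ?A ?B"
    by (simp add: bij_betw_def image_Suc_atLeastLessThan atLeastLessThanSuc_atLeastAtMost)
  have inj: "inj_on Suc ?A" by simp
  have bij2: "bij_betw (\<lambda>x. x - 1) ?B ?A"
    by (auto simp: bij_betw_def inj_on_def image_def intro!: bexI[of _ "Suc x" for x])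
  have "det (mat n n (\<lambda>(i,j). M (Suc i) (Suc j))) =
     (\<Sum>p\<in>{p. p permutes ?A}. of_int (sign p) * (\<Prod>i=0..<n. M (Suc i) (Suc (p i))))"
    by (subst det_def'[of _ n]) auto
  also have "\<dots> = (\<Sum>q\<in>{q. q permutes ?B}. of_int (sign q) * (\<Prod>i\<in>?B. M i (q i)))"
  proof (rule sum.reindex_bij_witness[of _ "map_permutation ?B (\<lambda>x. x - 1)" "map_permutation ?A Suc"])
    fix q assume q: "q \<in> {q. q permutes ?B}"
    then show "map_permutation ?A Suc (map_permutation ?B (\<lambda>x. x - 1) q) = q"
      by (intro map_permutation_compose_inv[OF bij2]) auto
    show "map_permutation ?B (\<lambda>x. x - 1) q \<in> {p. p permutes ?A}"
      using q by (intro CollectI map_permutation_permutes[OF bij2]) simp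
  next
    fix p assume p: "p \<in> {p. p permutes ?A}"
    then show "map_permutation ?B (\<lambda>x. x - 1) (map_permutation ?A Suc p) = p"
      by (intro map_permutation_compose_inv[OF bij]) auto
    show "map_permutation ?A Suc p \<in> {q. q permutes ?B}"
      using p by (intro CollectI map_permutation_permutes[OF bij]) simp
    have s: "sign (map_permutation ?A Suc p) = sign p"
      using p by (intro sign_map_permutation) auto
    have "(\<Prod>i\<in>?B. M i (map_permutation ?A Suc p i)) = (\<Prod>i\<in>?A. M (Suc i) (map_permutation ?A Suc p (Suc i)))"
      by (rule prod.reindex_bij_betw[OF bij, symmetric])
    also have "\<dots> = (\<Prod>i\<in>?A. M (Suc i) (Suc (p i)))"
      by (intro prod.cong refl) (simp add: map_permutation_apply[OF inj])
    finally show "of_int (sign (map_permutation ?A Suc p)) * (\<Prod>i\<in>?B. M i (map_permutation ?A Suc p i)) =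
       of_int (sign p) * (\<Prod>i=0..<n. M (Suc i) (Suc (p i)))" using s by simp
  qed
  also have "\<dots> = det_n n M" unfolding det_n_def by simp
  finally show ?thesis by simp
qed


fun Pc :: "nat \<Rightarrow> complex poly" where
  "Pc 0 = 0" | "Pc (Suc 0) = 1" | "Pc (Suc (Suc n)) = [:0,1:] * Pc (Suc n) - Pc n"

lemma Pc_eval:
  fixes t :: complex assumes "t \<noteq> 0"
  shows "t ^ a - inverse (t ^ a) = (t - inverse t) * poly (Pc a) (t + inverse t)"
proof (induction a rule: Pc.induct)
  case (3 n)
  have "t ^ Suc (Suc n) - inverse (t ^ Suc (Suc n)) =
        (t + inverse t) * (t ^ Suc n - inverse (t ^ Suc n)) - (t ^ n - inverse (t ^ n))"
    using assms by (simp add: field_simps)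
  also have "\<dots> = (t + inverse t) * ((t - inverse t) * poly (Pc (Suc n)) (t + inverse t))
       - (t - inverse t) * poly (Pc n) (t + inverse t)"
    by (simp only: 3)
  also have "\<dots> = (t - inverse t) * poly (Pc (Suc (Suc n))) (t + inverse t)"
    by (simp add: algebra_simps)
  finally show ?case .
qed auto

lemma Pc_deg: "degree (Pc (Suc n)) = n \<and> coeff (Pc (Suc n)) n = 1"
proof (induction n rule: less_induct)
  case (less n)
  show ?case
  proof (cases n)
    case 0 then show ?thesis by simp
  next
    case (Suc k)
    show ?thesis
    proof (cases k)
      case 0 then show ?thesis using Suc by (simp add: degree_pCons_eq)
    next
      case (Suc j)
      have IH1: "degree (Pc (Suc k)) = k" "coeff (Pc (Suc k)) k = 1" using less \<open>n = Suc k\<close> by auto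
      have IH2: "degree (Pc (Suc j)) = j" using less \<open>n = Suc k\<close> Suc by auto
      have d1: "degree ([:0,1:] * Pc (Suc k)) = Suc k"
        using IH1 by (subst degree_mult_eq) auto
      have c1: "coeff ([:0,1:] * Pc (Suc k)) (Suc k) = 1" using IH1 by simp
      have eq: "Pc (Suc n) = [:0,1:] * Pc (Suc k) + - Pc (Suc j)" using \<open>n = Suc k\<close> Suc by simp
      have lt: "degree (- Pc (Suc j)) < degree ([:0,1:] * Pc (Suc k))" using d1 IH2 Suc by simp
      have "degree (Pc (Suc n)) = Suc k" unfolding eq using degree_add_eq_left[OF lt] d1 by simp
      moreover have "coeff (Pc (Suc n)) (Suc k) = 1" unfolding eq using c1 IH2 Suc by (simp add: coeff_eq_0)
      ultimately show ?thesis using \<open>n = Suc k\<close> by simp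
    qed
  qed
qed

lemma Pc_degree_le: "degree (Pc a) \<le> a - 1"
  using Pc_deg[of "a - 1"] by (cases a) auto

lemma Pc_neg: "poly (Pc a) (- v) = (-1) ^ Suc a * poly (Pc a) v"
  by (induction a rule: Pc.induct) (auto simp: algebra_simps)

lemma Pc_prod: "Pc (Suc p) * Pc (Suc q) = Pc p * Pc q + Pc (p + q + 1)"
proof (induction p arbitrary: q rule: less_induct)
  case (less p)
  show ?case
  proof (cases p)
    case 0 then show ?thesis by simp
  next
    case (Suc p')
    have IH: "Pc (Suc p') * Pc (Suc (Suc q)) = Pc p' * Pc (Suc q) + Pc (p' + Suc q + 1)"
      using less Suc by blast
    have e: "[:0,1:] * Pc (Suc q) = Pc (Suc (Suc q)) + Pc q" by simp
    have "Pc (Suc p) * Pc (Suc q) = ([:0,1:] * Pc (Suc p') - Pc p') * Pc (Suc q)"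
      using Suc by simp
    also have "\<dots> = Pc (Suc p') * ([:0,1:] * Pc (Suc q)) - Pc p' * Pc (Suc q)"
      by (simp add: algebra_simps)
    also have "\<dots> = Pc (Suc p') * Pc (Suc (Suc q)) + Pc (Suc p') * Pc q - Pc p' * Pc (Suc q)"
      unfolding e by (simp add: algebra_simps)
    also have "\<dots> = Pc p * Pc q + Pc (p + q + 1)"
      using IH Suc by (simp add: algebra_simps)
    finally show ?thesis .
  qed
qed

lemma poly_roots_prod:
  fixes p :: "complex poly"
  assumes "degree p \<le> k" "inj_on z {..<k}" "\<And>j. j < k \<Longrightarrow> poly p (z j) = 0"
  shows "p = smult (coeff p k) (\<Prod>j<k. [:- z j, 1:])"
  using assms
proof (induction k arbitrary: p)
  case 0
  then show ?case by (auto elim!: degree_eq_zeroE)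
next
  case (Suc k)
  have "[:- z k, 1:] dvd p" using Suc.prems(3)[of k] by (simp add: poly_eq_0_iff_dvd)
  then obtain q where q: "p = [:- z k, 1:] * q" by (elim dvdE)
  have dq: "degree q \<le> k"
  proof (cases "q = 0")
    case False
    then have "degree p = Suc (degree q)" unfolding q by (subst degree_mult_eq) auto
    then show ?thesis using Suc.prems(1) by simp
  qed simp
  have inj: "inj_on z {..<k}" using Suc.prems(2) by (rule inj_on_subset) auto
  have rq: "poly q (z j) = 0" if "j < k" for j
  proof -
    have "z j \<noteq> z k" using Suc.prems(2) that by (auto dest: inj_onD)
    moreover have "poly p (z j) = 0" using Suc.prems(3) that by simp
    ultimately show ?thesis unfolding q by simp
  qed
  have IH: "q = smult (coeff q k) (\<Prod>j<k. [:- z j, 1:])" using Suc.IH[OF dq inj rq] by simp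
  have "coeff p (Suc k) = coeff q k"
    unfolding q using dq by (simp add: coeff_eq_0)
  then show ?case
    by (subst q, subst IH) (simp add: mult_smult_right)
qed


definition AD :: "nat \<Rightarrow> (nat \<Rightarrow> nat) \<Rightarrow> (nat \<Rightarrow> complex) \<Rightarrow> complex" where
  "AD k \<alpha> z = det (mat k k (\<lambda>(i,j). poly (Pc (\<alpha> i)) (z j)))"

lemma AD_cong:
  assumes "\<And>i. i < k \<Longrightarrow> \<alpha> i = \<beta> i" "\<And>j. j < k \<Longrightarrow> z j = z' j"
  shows "AD k \<alpha> z = AD k \<beta> z'"
proof -
  have "mat k k (\<lambda>(i,j). poly (Pc (\<alpha> i)) (z j)) = mat k k (\<lambda>(i,j). poly (Pc (\<beta> i)) (z' j))"
    by (rule eq_matI) (auto simp: assms)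
  then show ?thesis unfolding AD_def by simp
qed

lemma AD_upd [simp]: "AD k \<alpha> (z(k := v)) = AD k \<alpha> z"
  by (rule AD_cong) auto

lemma AD_ident_cols:
  assumes "i < k" "j < k" "i \<noteq> j" "z i = z j"
  shows "AD k \<alpha> z = 0"
  unfolding AD_def
  by (rule det_identical_columns[of _ k i j]) (use assms in \<open>auto intro!: eq_vecI\<close>)

lemma AD_laplace:
  "AD (Suc k) \<alpha> z = (\<Sum>i<Suc k. (-1)^(i+k) * poly (Pc (\<alpha> i)) (z k) *
      AD k (\<lambda>i'. \<alpha> (if i' < i then i' else Suc i')) z)"
proof -
  let ?A = "mat (Suc k) (Suc k) (\<lambda>(i,j). poly (Pc (\<alpha> i)) (z j))"
  have A: "?A \<in> carrier_mat (Suc k) (Suc k)" by simp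
  have "AD (Suc k) \<alpha> z = (\<Sum>i<Suc k. ?A $$ (i,k) * cofactor ?A i k)"
    unfolding AD_def by (rule laplace_expansion_column[OF A]) simp
  also have "\<dots> = (\<Sum>i<Suc k. (-1)^(i+k) * poly (Pc (\<alpha> i)) (z k) *
      AD k (\<lambda>i'. \<alpha> (if i' < i then i' else Suc i')) z)"
  proof (intro sum.cong refl)
    fix i assume i: "i \<in> {..<Suc k}"
    have "mat_delete ?A i k = mat k k (\<lambda>(i',j). poly (Pc (\<alpha> (if i' < i then i' else Suc i'))) (z j))"
      unfolding mat_delete_def by (rule eq_matI) auto
    then show "?A $$ (i,k) * cofactor ?A i k = (-1)^(i+k) * poly (Pc (\<alpha> i)) (z k) *
      AD k (\<lambda>i'. \<alpha> (if i' < i then i' else Suc i')) z"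
      using i unfolding cofactor_def AD_def by simp
  qed
  finally show ?thesis .
qed

lemma AD_factor:
  "AD (Suc k) (\<lambda>i. Suc k - i) (z(k := W)) = (-1)^k * AD k (\<lambda>i. k - i) z * (\<Prod>j<k. W - z j)"
proof -
  define c where "c i = (-1)^(i+k) * AD k (\<lambda>i'. Suc k - (if i' < i then i' else Suc i')) z" for i
  define B where "B = (\<Sum>i<Suc k. smult (c i) (Pc (Suc k - i)))"
  have evB: "poly B v = AD (Suc k) (\<lambda>i. Suc k - i) (z(k := v))" for v
  proof -
    have "AD (Suc k) (\<lambda>i. Suc k - i) (z(k := v)) = (\<Sum>i<Suc k. (-1)^(i+k) * poly (Pc (Suc k - i)) v *
      AD k (\<lambda>i'. Suc k - (if i' < i then i' else Suc i')) (z(k := v)))"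
      by (subst AD_laplace) simp
    also have "\<dots> = poly B v" unfolding B_def c_def poly_sum
      by (intro sum.cong refl) (simp add: algebra_simps)
    finally show ?thesis by simp
  qed
  have degB: "degree B \<le> k" unfolding B_def
    by (intro degree_sum_le) (auto intro: order.trans[OF degree_smult_le] order.trans[OF Pc_degree_le])
  have cB: "coeff B k = c 0"
  proof -
    have "coeff B k = (\<Sum>i<Suc k. c i * coeff (Pc (Suc k - i)) k)"
      unfolding B_def by (simp only: coeff_sum coeff_smult)
    also have "\<dots> = c 0 * coeff (Pc (Suc k)) k + (\<Sum>i<k. c (Suc i) * coeff (Pc (Suc k - Suc i)) k)"
      by (subst sum.lessThan_Suc_shift) simp
    also have "(\<Sum>i<k. c (Suc i) * coeff (Pc (Suc k - Suc i)) k) = 0"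
    proof (intro sum.neutral ballI)
      fix i assume "i \<in> {..<k}"
      then have "degree (Pc (Suc k - Suc i)) < k" using Pc_degree_le[of "Suc k - Suc i"] by simp
      then show "c (Suc i) * coeff (Pc (Suc k - Suc i)) k = 0" by (simp add: coeff_eq_0)
    qed
    finally show ?thesis using Pc_deg[of k] by simp
  qed
  have c0: "c 0 = (-1)^k * AD k (\<lambda>i. k - i) z"
  proof -
    have "AD k (\<lambda>i'. Suc k - (if i' < 0 then i' else Suc i')) z = AD k (\<lambda>i. k - i) z"
      by (rule AD_cong) auto
    then show ?thesis unfolding c_def by simp
  qed
  show ?thesis
  proof (cases "inj_on z {..<k}")
    case True
    have roots: "poly B (z j) = 0" if "j < k" for j
      unfolding evB by (rule AD_ident_cols[of j _ k]) (use that in auto)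
    have "B = smult (coeff B k) (\<Prod>j<k. [:- z j, 1:])"
      by (rule poly_roots_prod[OF degB True roots])
    then have "poly B W = coeff B k * poly (\<Prod>j<k. [:- z j, 1:]) W"
      by (metis poly_smult)
    then have "poly B W = coeff B k * (\<Prod>j<k. W - z j)"
      by (simp add: poly_prod)
    then show ?thesis using evB cB c0 by simp
  next
    case False
    then obtain i j where ij: "i < k" "j < k" "i \<noteq> j" "z i = z j" unfolding inj_on_def by auto
    have "AD k (\<lambda>i. k - i) z = 0" by (rule AD_ident_cols[OF ij])
    moreover have "AD (Suc k) (\<lambda>i. Suc k - i) (z(k := W)) = 0"
      by (rule AD_ident_cols[of i _ j]) (use ij in auto)
    ultimately show ?thesis by simp
  qed
qed


lemma det_colscale:
  "det (mat n n (\<lambda>(i,j). c j * f i j)) = (\<Prod>j<n. c j) * det (mat n n (\<lambda>(i,j). f i j))"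
proof -
  have "det (mat n n (\<lambda>(i,j). c j * f i j)) =
    (\<Sum>p\<in>{p. p permutes {0..<n}}. signof p * (\<Prod>i=0..<n. c (p i) * f i (p i)))"
    by (subst det_def'[of _ n]) auto
  also have "\<dots> = (\<Sum>p\<in>{p. p permutes {0..<n}}. (\<Prod>j<n. c j) * (signof p * (\<Prod>i=0..<n. f i (p i))))"
  proof (intro sum.cong refl)
    fix p assume p: "p \<in> {p. p permutes {0..<n}}"
    have "(\<Prod>i=0..<n. c (p i)) = (\<Prod>j=0..<n. c j)"
      using prod.permute[of p "{0..<n}" c] p by (simp add: comp_def)
    then show "signof p * (\<Prod>i=0..<n. c (p i) * f i (p i)) = (\<Prod>j<n. c j) * (signof p * (\<Prod>i=0..<n. f i (p i)))"
      by (simp add: prod.distrib atLeast0LessThan)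
  qed
  also have "\<dots> = (\<Prod>j<n. c j) * det (mat n n (\<lambda>(i,j). f i j))"
    by (subst det_def'[of _ n]) (auto simp: sum_distrib_left)
  finally show ?thesis .
qed

lemma sp_num_AD:
  assumes "\<forall>j\<in>{1..m}. y j \<noteq> 0"
  shows "sp_num m lam y = (\<Prod>j<m. y (Suc j) - inverse (y (Suc j))) *
     AD m (\<lambda>i. lam (Suc i) + m - i) (\<lambda>j. y (Suc j) + inverse (y (Suc j)))"
proof -
  have "sp_num m lam y = det (mat m m (\<lambda>(i,j). y (Suc j) ^ (lam (Suc i) + m - Suc i + 1) -
           inverse (y (Suc j) ^ (lam (Suc i) + m - Suc i + 1))))"
    unfolding sp_num_def det_n_conv by simp
  also have "mat m m (\<lambda>(i,j). y (Suc j) ^ (lam (Suc i) + m - Suc i + 1) -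
           inverse (y (Suc j) ^ (lam (Suc i) + m - Suc i + 1))) =
     mat m m (\<lambda>(i,j). (y (Suc j) - inverse (y (Suc j))) *
        poly (Pc (lam (Suc i) + m - i)) (y (Suc j) + inverse (y (Suc j))))"
  proof (rule eq_matI)
    fix i j assume ij: "i < dim_row (mat m m (\<lambda>(i,j). (y (Suc j) - inverse (y (Suc j))) *
        poly (Pc (lam (Suc i) + m - i)) (y (Suc j) + inverse (y (Suc j)))))"
       "j < dim_col (mat m m (\<lambda>(i,j). (y (Suc j) - inverse (y (Suc j))) *
        poly (Pc (lam (Suc i) + m - i)) (y (Suc j) + inverse (y (Suc j)))))"
    then have "y (Suc j) \<noteq> 0" using assms by auto
    then have pe: "y (Suc j) ^ (lam (Suc i) + m - i) - inverse (y (Suc j) ^ (lam (Suc i) + m - i)) =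
      (y (Suc j) - inverse (y (Suc j))) * poly (Pc (lam (Suc i) + m - i)) (y (Suc j) + inverse (y (Suc j)))"
      by (rule Pc_eval)
    have e: "Suc (lam (Suc i) + m - Suc i) = lam (Suc i) + m - i" using ij by simp
    show "mat m m (\<lambda>(i,j). y (Suc j) ^ (lam (Suc i) + m - Suc i + 1) -
           inverse (y (Suc j) ^ (lam (Suc i) + m - Suc i + 1))) $$ (i, j) =
     mat m m (\<lambda>(i,j). (y (Suc j) - inverse (y (Suc j))) *
        poly (Pc (lam (Suc i) + m - i)) (y (Suc j) + inverse (y (Suc j)))) $$ (i, j)"
      using ij pe by (simp add: e del: power_Suc)
  qed auto
  finally show ?thesis unfolding AD_def by (simp add: det_colscale)
qed

lemma sp_char_AD:
  assumes "\<forall>j\<in>{1..m}. y j \<noteq> 0" "sp_den m y \<noteq> 0"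
  shows "sp_char m lam y = AD m (\<lambda>i. lam (Suc i) + m - i) (\<lambda>j. y (Suc j) + inverse (y (Suc j))) /
                           AD m (\<lambda>i. m - i) (\<lambda>j. y (Suc j) + inverse (y (Suc j)))"
    and "AD m (\<lambda>i. m - i) (\<lambda>j. y (Suc j) + inverse (y (Suc j))) \<noteq> 0"
proof -
  have den: "sp_den m y = (\<Prod>j<m. y (Suc j) - inverse (y (Suc j))) *
     AD m (\<lambda>i. m - i) (\<lambda>j. y (Suc j) + inverse (y (Suc j)))"
    unfolding sp_den_def using sp_num_AD[OF assms(1), of "\<lambda>_. 0"] by simp
  then have nz: "(\<Prod>j<m. y (Suc j) - inverse (y (Suc j))) \<noteq> 0" using assms(2) by auto
  show "AD m (\<lambda>i. m - i) (\<lambda>j. y (Suc j) + inverse (y (Suc j))) \<noteq> 0" using den assms(2) by auto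
  show "sp_char m lam y = AD m (\<lambda>i. lam (Suc i) + m - i) (\<lambda>j. y (Suc j) + inverse (y (Suc j))) /
                           AD m (\<lambda>i. m - i) (\<lambda>j. y (Suc j) + inverse (y (Suc j)))"
    unfolding sp_char_def den sp_num_AD[OF assms(1)] using nz by simp
qed


definition evf :: "complex fls \<Rightarrow> complex poly \<Rightarrow> complex fls" where
  "evf t p = poly (map_poly fls_const p) t"

lemma evf_0 [simp]: "evf t 0 = 0" by (simp add: evf_def)

lemma evf_pCons [simp]: "evf t (pCons a p) = fls_const a + t * evf t p"
  by (simp add: evf_def map_poly_pCons)

lemma evf_1 [simp]: "evf t 1 = 1"
  by (simp add: one_pCons)

lemma evf_add [simp]: "evf t (p + q) = evf t p + evf t q"
proof -
  have "map_poly fls_const (p + q) = map_poly fls_const p + map_poly fls_const q"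
    by (rule poly_eqI) (simp add: coeff_map_poly fls_plus_const)
  then show ?thesis by (simp add: evf_def)
qed

lemma evf_smult [simp]: "evf t (smult c p) = fls_const c * evf t p"
proof -
  have "map_poly fls_const (smult c p) = smult (fls_const c) (map_poly fls_const p)"
    by (rule map_poly_smult) auto
  then show ?thesis by (simp add: evf_def)
qed

lemma evf_uminus [simp]: "evf t (- p) = - evf t p"
proof -
  have "- p = smult (-1) p" by simp
  then show ?thesis by (simp only: evf_smult fls_const_uminus fls_const_1) simp
qed

lemma evf_diff [simp]: "evf t (p - q) = evf t p - evf t q"
  using evf_add[of t p "- q"] by simp

lemma evf_mult [simp]: "evf t (p * q) = evf t p * evf t q"
proof (induction p rule: pCons_induct)
  case (pCons a p)
  have "pCons a p * q = smult a q + pCons 0 (p * q)" by simp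
  then show ?case using pCons by (simp add: algebra_simps)
qed simp

lemma evf_sum: "evf t (\<Sum>i\<in>A. f i) = (\<Sum>i\<in>A. evf t (f i))"
  by (induction A rule: infinite_finite_induct) auto

lemma evf_prod: "evf t (\<Prod>i\<in>A. f i) = (\<Prod>i\<in>A. evf t (f i))"
  by (induction A rule: infinite_finite_induct) auto

abbreviation XX :: "complex fls" where "XX \<equiv> fls_X"
abbreviation Xi :: "complex fls" where "Xi \<equiv> fls_X_inv"
abbreviation Ip :: "int \<Rightarrow> complex fls" where "Ip k \<equiv> fls_shift (- k) 1"

lemma XXi: "XX * Xi = 1"
  by (simp add: fls_X_times_conv_shift fls_X_inv_conv_shift_1)

lemma Ip_nth [simp]: "fls_nth (Ip k) n = (if n = k then 1 else 0)"
  by simp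

lemma X_Ip: "XX * Ip k = Ip (k + 1)" by (simp add: fls_X_times_conv_shift)
lemma Xi_Ip: "Xi * Ip k = Ip (k - 1)" by (simp add: fls_X_inv_times_conv_shift)

definition Sa :: "nat \<Rightarrow> complex fls" where
  "Sa a = (\<Sum>j<a. Ip (int a - 1 - 2 * int j))"

lemma Sa_tel: "(XX - Xi) * Sa a = XX ^ a - Xi ^ a"
proof -
  have "(XX - Xi) * Sa a = (\<Sum>j<a. Ip (int a - 2 * int j) - Ip (int a - 2 * int j - 2))"
    unfolding Sa_def sum_distrib_left
    by (intro sum.cong refl) (simp add: algebra_simps fls_X_times_conv_shift fls_X_inv_times_conv_shift)
  also have "\<dots> = (\<Sum>j<a. (- Ip (int a - 2 * int (Suc j))) - (- Ip (int a - 2 * int j)))"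
    by (intro sum.cong refl) (simp add: algebra_simps)
  also have "\<dots> = (- Ip (int a - 2 * int a)) - (- Ip (int a - 2 * int 0))"
    by (rule sum_lessThan_telescope)
  also have "\<dots> = XX ^ a - Xi ^ a"
    by (simp add: fls_X_power_conv_shift_1 fls_X_inv_power_conv_shift_1)
  finally show ?thesis .
qed

abbreviation TT :: "complex fls" where "TT \<equiv> XX + Xi"

lemma XmXi_nz: "XX - Xi \<noteq> 0"
proof
  assume "XX - Xi = 0"
  then have "fls_nth (XX - Xi) 1 = 0" by simp
  then show False by simp
qed

lemma TT_nz: "TT \<noteq> 0"
proof
  assume "TT = 0"
  then have "fls_nth TT 1 = 0" by simp
  then show False by simp
qed

lemma evf_Pc_tel: "(XX - Xi) * evf TT (Pc a) = XX ^ a - Xi ^ a"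
proof (induction a rule: Pc.induct)
  case (3 n)
  have "(XX - Xi) * evf TT (Pc (Suc (Suc n))) =
        TT * ((XX - Xi) * evf TT (Pc (Suc n))) - (XX - Xi) * evf TT (Pc n)"
    by (simp add: algebra_simps)
  also have "\<dots> = TT * (XX ^ Suc n - Xi ^ Suc n) - (XX ^ n - Xi ^ n)" using 3 by simp
  also have "\<dots> = XX ^ Suc (Suc n) - Xi ^ Suc (Suc n) + ((XX * Xi) * XX ^ n - (XX * Xi) * Xi ^ n) - (XX ^ n - Xi ^ n)"
    by (simp add: algebra_simps)
  also have "\<dots> = XX ^ Suc (Suc n) - Xi ^ Suc (Suc n)" by (simp add: XXi)
  finally show ?case .
qed auto

lemma evf_Pc: "evf TT (Pc a) = Sa a"
  using evf_Pc_tel[of a] Sa_tel[of a] XmXi_nz by (metis mult_left_cancel)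

lemma CT_Pc: "fls_nth (evf TT (Pc a)) 0 = (if odd a then 1 else 0)"
proof -
  have "fls_nth (Sa a) 0 = (\<Sum>j<a. if j = (a - 1) div 2 \<and> odd a then 1 else 0)"
    unfolding Sa_def fls_nth_sum
  proof (intro sum.cong refl)
    fix j assume "j \<in> {..<a}"
    have "(0 = int a - 1 - 2 * int j) = (j = (a - 1) div 2 \<and> odd a)" by presburger
    then show "fls_nth (Ip (int a - 1 - 2 * int j)) 0 = (if j = (a - 1) div 2 \<and> odd a then 1 else 0)"
      by (simp only: Ip_nth)
  qed
  also have "\<dots> = (if odd a then 1 else 0)"
  proof (cases "odd a")
    case True
    then have "(a - 1) div 2 \<in> {..<a}" by (auto elim!: oddE)
    then show ?thesis using True by (simp add: sum.delta)
  qed simp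
  finally show ?thesis by (simp add: evf_Pc)
qed


definition cb :: "nat \<Rightarrow> complex" where
  "cb n = (if even n then of_nat (n choose (n div 2)) else 0)"

lemma CT_pow:
  assumes "r > 0"
  shows "fls_nth ((XX ^ r + Xi ^ r) ^ n) 0 = cb n"
proof -
  have "fls_nth ((XX ^ r + Xi ^ r) ^ n) 0 =
     (\<Sum>k\<le>n. of_nat (n choose k) * fls_nth ((XX ^ r) ^ k * (Xi ^ r) ^ (n - k)) 0)"
    unfolding binomial_ring fls_nth_sum
    by (intro sum.cong refl) (simp add: fls_of_nat mult.assoc)
  also have "\<dots> = (\<Sum>k\<le>n. if k = n div 2 \<and> even n then of_nat (n choose k) else 0)"
  proof (intro sum.cong refl)
    fix k assume k: "k \<in> {..n}"
    have "(XX ^ r) ^ k * (Xi ^ r) ^ (n - k) = XX ^ (r * k) * Xi ^ (r * (n - k))"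
      by (simp add: power_mult)
    also have "\<dots> = fls_shift (- int (r * k)) (fls_shift (int (r * (n - k))) 1)"
      by (simp add: fls_X_power_times_conv_shift fls_X_inv_power_conv_shift_1)
    finally have e: "(XX ^ r) ^ k * (Xi ^ r) ^ (n - k) = fls_shift (- int (r * k)) (fls_shift (int (r * (n - k))) 1)" .
    have e1: "(int (r * k) = int (r * (n - k))) = (k = n - k)" using assms by simp
    have e2: "(k = n - k) = (k = n div 2 \<and> even n)" using k by simp presburger
    have "(int (r * k) = int (r * (n - k))) = (k = n div 2 \<and> even n)" using e1 e2 by simp
    then show "of_nat (n choose k) * fls_nth ((XX ^ r) ^ k * (Xi ^ r) ^ (n - k)) 0 =
       (if k = n div 2 \<and> even n then of_nat (n choose k) else 0)"
      unfolding e by auto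
  qed
  also have "\<dots> = cb n"
    unfolding cb_def by (cases "even n") (auto simp: sum.delta)
  finally show ?thesis .
qed

lemma fls_const_prod: "fls_const (\<Prod>i\<in>A. f i) = (\<Prod>i\<in>A. fls_const (f i))"
  by (induction A rule: infinite_finite_induct) (auto simp flip: fls_const_mult_const)

lemma CT_prod_lin:
  assumes "finite J" "\<And>n. fls_nth (T ^ n) 0 = cb n"
  shows "fls_nth (\<Prod>j\<in>J. T - fls_const (c j)) 0 =
     (-1) ^ card J * (\<Sum>B\<in>Pow J. (\<Prod>j\<in>B. c j) * cb (card J - card B))"
proof -
  have "(\<Prod>j\<in>J. T - fls_const (c j)) = (\<Prod>j\<in>J. fls_const (- c j) + T)"
    by (intro prod.cong refl) simp
  also have "\<dots> = (\<Sum>B\<in>Pow J. (\<Prod>j\<in>B. fls_const (- c j)) * (\<Prod>j\<in>J - B. T))"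
    by (rule prod_add[OF assms(1)])
  also have "\<dots> = (\<Sum>B\<in>Pow J. fls_const (\<Prod>j\<in>B. - c j) * T ^ (card J - card B))"
  proof (intro sum.cong refl)
    fix B assume "B \<in> Pow J"
    then have "B \<subseteq> J" "finite B" using assms(1) finite_subset by auto
    then have "card (J - B) = card J - card B" by (simp add: card_Diff_subset)
    then show "(\<Prod>j\<in>B. fls_const (- c j)) * (\<Prod>j\<in>J - B. T) = fls_const (\<Prod>j\<in>B. - c j) * T ^ (card J - card B)"
      by (simp add: fls_const_prod)
  qed
  finally have e: "(\<Prod>j\<in>J. T - fls_const (c j)) = (\<Sum>B\<in>Pow J. fls_const (\<Prod>j\<in>B. - c j) * T ^ (card J - card B))" .
  have "fls_nth (\<Prod>j\<in>J. T - fls_const (c j)) 0 = (\<Sum>B\<in>Pow J. (\<Prod>j\<in>B. - c j) * cb (card J - card B))"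
    unfolding e fls_nth_sum by (simp add: assms(2))
  also have "\<dots> = (\<Sum>B\<in>Pow J. (-1) ^ card J * ((\<Prod>j\<in>B. c j) * cb (card J - card B)))"
  proof (intro sum.cong refl)
    fix B assume "B \<in> Pow J"
    then have B: "B \<subseteq> J" "finite B" using assms(1) finite_subset by auto
    then have le: "card B \<le> card J" using assms(1) by (simp add: card_mono)
    have "(\<Prod>j\<in>B. - c j) = (\<Prod>j\<in>B. (-1) * c j)" by simp
    also have "\<dots> = (\<Prod>j\<in>B. -1) * (\<Prod>j\<in>B. c j)" by (rule prod.distrib)
    also have "\<dots> = (-1) ^ card B * (\<Prod>j\<in>B. c j)" by simp
    finally have "(\<Prod>j\<in>B. - c j) = (-1) ^ card B * (\<Prod>j\<in>B. c j)" .
    moreover have "(-1::complex) ^ card B * cb (card J - card B) = (-1) ^ card J * cb (card J - card B)"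
    proof (cases "even (card J - card B)")
      case True
      then have "even (card J) = even (card B)" using le by auto
      then show ?thesis by (simp add: minus_one_power_iff)
    qed (simp add: cb_def)
    ultimately show "(\<Prod>j\<in>B. - c j) * cb (card J - card B) = (-1) ^ card J * ((\<Prod>j\<in>B. c j) * cb (card J - card B))"
      by (metis (no_types, lifting) mult.assoc mult.commute)
  qed
  also have "\<dots> = (-1) ^ card J * (\<Sum>B\<in>Pow J. (\<Prod>j\<in>B. c j) * cb (card J - card B))"
    by (simp add: sum_distrib_left)
  finally show ?thesis .
qed

definition Lam :: "complex poly \<Rightarrow> complex" where "Lam G = fls_nth (evf TT G) 0"
definition Phi :: "complex poly \<Rightarrow> complex" where "Phi G = fls_nth (evf TT G / TT) 0"

lemma Lam_add: "Lam (p + q) = Lam p + Lam q" by (simp add: Lam_def)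
lemma Lam_smult: "Lam (smult c p) = c * Lam p" by (simp add: Lam_def)
lemma Lam_sum: "Lam (\<Sum>i\<in>A. f i) = (\<Sum>i\<in>A. Lam (f i))" by (simp add: Lam_def evf_sum fls_nth_sum)
lemma Phi_add: "Phi (p + q) = Phi p + Phi q" by (simp add: Phi_def add_divide_distrib)
lemma Phi_smult: "Phi (smult c p) = c * Phi p"
  unfolding Phi_def evf_smult by (simp only: times_divide_eq_right[symmetric] fls_mult_const_nth)
lemma Phi_sum: "Phi (\<Sum>i\<in>A. f i) = (\<Sum>i\<in>A. Phi (f i))"
  by (simp add: Phi_def evf_sum fls_nth_sum sum_divide_distrib)
lemma Phi_X: "Phi ([:0,1:] * G) = Lam G"
  using TT_nz by (simp add: Phi_def Lam_def)

lemma Lam_Pc: "Lam (Pc a) = (if odd a then 1 else 0)"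
  by (simp add: Lam_def CT_Pc)

lemma Phi_Pc_even: "Phi (Pc (2 * r)) = (if odd r then 1 else 0)"
proof (induction r)
  case (Suc r)
  have "Pc (2 * Suc r) = [:0,1:] * Pc (Suc (2 * r)) - Pc (2 * r)" by simp
  then have "Phi (Pc (2 * Suc r)) = Lam (Pc (Suc (2 * r))) - Phi (Pc (2 * r))"
    using TT_nz by (simp add: Phi_def Lam_def diff_divide_distrib)
  then show ?case using Suc by (simp add: Lam_Pc)
qed (simp add: Phi_def)

definition hh :: "nat \<Rightarrow> nat \<Rightarrow> complex" where
  "hh p z = of_nat (if even p then p div 2 else if even z then (p + 1) div 2 else (p - 1) div 2)"

lemma Phi_PcPc: "Phi (Pc p * Pc (p + 2 * z + 1)) = hh p z"
proof (induction p)
  case 0 then show ?case by (simp add: Phi_def hh_def)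
next
  case (Suc p)
  have i1: "Suc p + 2 * z + 1 = Suc (p + 2 * z + 1)" by simp
  have i2: "p + (p + 2 * z + 1) + 1 = 2 * (p + z + 1)" by simp
  have e: "Pc (Suc p) * Pc (Suc p + 2 * z + 1) = Pc p * Pc (p + 2 * z + 1) + Pc (2 * (p + z + 1))"
    using Pc_prod[of p "p + 2 * z + 1"] unfolding i1 i2 .
  have "Phi (Pc (Suc p) * Pc (Suc p + 2 * z + 1)) = Phi (Pc p * Pc (p + 2 * z + 1)) + Phi (Pc (2 * (p + z + 1)))"
    unfolding e by (rule Phi_add)
  also have "\<dots> = hh p z + (if odd (p + z + 1) then 1 else 0)"
    using Suc.IH by (simp only: Phi_Pc_even)
  finally have "Phi (Pc (Suc p) * Pc (Suc p + 2 * z + 1)) = hh p z + (if odd (p + z + 1) then 1 else 0)" .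
  also have "\<dots> = hh (Suc p) z"
    unfolding hh_def by (cases "even p"; cases "even z") (auto elim!: evenE oddE simp: algebra_simps)
  finally show ?case .
qed

lemma eta2_hh: "of_int (eta2 z b) = (-1) ^ b * hh (Suc b) z"
  unfolding eta2_def hh_def
  by (cases "even b"; cases "even z") (auto elim!: evenE oddE simp: algebra_simps)


lemma sum_even_reindex:
  fixes m :: nat and g :: "nat \<Rightarrow> 'a::comm_monoid_add"
  shows "(\<Sum>k\<in>{0..m}. if even (m - k) then g k else 0) = (\<Sum>l\<in>{0..m div 2}. g (m - 2 * l))"
proof -
  have inj: "inj_on (\<lambda>l. m - 2 * l) {0..m div 2}" by (auto simp: inj_on_def)
  have "(\<Sum>l\<in>{0..m div 2}. g (m - 2 * l)) = (\<Sum>l\<in>{0..m div 2}. if even (m - (m - 2 * l)) then g (m - 2 * l) else 0)"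
    by (intro sum.cong refl) auto
  also have "\<dots> = (\<Sum>k\<in>(\<lambda>l. m - 2 * l) ` {0..m div 2}. if even (m - k) then g k else 0)"
    by (rule sum.reindex[OF inj, symmetric, unfolded comp_def])
  also have "\<dots> = (\<Sum>k\<in>{0..m}. if even (m - k) then g k else 0)"
  proof (rule sum.mono_neutral_left)
    show "(\<lambda>l. m - 2 * l) ` {0..m div 2} \<subseteq> {0..m}" by auto
    show "\<forall>i\<in>{0..m} - (\<lambda>l. m - 2 * l) ` {0..m div 2}. (if even (m - i) then g i else 0) = 0"
    proof
      fix k assume k: "k \<in> {0..m} - (\<lambda>l. m - 2 * l) ` {0..m div 2}"
      show "(if even (m - k) then g k else 0) = 0"
      proof (cases "even (m - k)")
        case True
        then obtain l where l: "m - k = 2 * l" by (elim evenE)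
        then have "k = m - 2 * l" "l \<in> {0..m div 2}" using k by auto
        then show ?thesis using k by auto
      qed simp
    qed
  qed simp
  finally show ?thesis by simp
qed

lemma middle_comb:
  assumes "finite J" "card J = m"
  shows "(\<Sum>B\<in>Pow J. (\<Prod>j\<in>B. f j) * cb (m - card B)) =
     (\<Sum>l=0..m div 2. of_nat ((2 * l) choose l) * (\<Sum>S | S \<subseteq> J \<and> card S = m - 2 * l. \<Prod>i\<in>S. f i))"
proof -
  have "(\<Sum>B\<in>Pow J. (\<Prod>j\<in>B. f j) * cb (m - card B)) =
      (\<Sum>k\<in>{0..m}. \<Sum>B | B \<in> Pow J \<and> card B = k. (\<Prod>j\<in>B. f j) * cb (m - card B))"
    by (rule sum.group[symmetric]) (use assms in \<open>auto intro: card_mono\<close>)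
  also have "\<dots> = (\<Sum>k\<in>{0..m}. if even (m - k) then of_nat ((m - k) choose ((m - k) div 2)) *
       (\<Sum>S | S \<subseteq> J \<and> card S = k. \<Prod>i\<in>S. f i) else 0)"
    by (intro sum.cong refl) (auto simp: cb_def sum_distrib_left mult.commute)
  also have "\<dots> = (\<Sum>l=0..m div 2. of_nat ((m - (m - 2 * l)) choose ((m - (m - 2 * l)) div 2)) *
       (\<Sum>S | S \<subseteq> J \<and> card S = m - 2 * l. \<Prod>i\<in>S. f i))"
    by (rule sum_even_reindex)
  also have "\<dots> = (\<Sum>l=0..m div 2. of_nat ((2 * l) choose l) * (\<Sum>S | S \<subseteq> J \<and> card S = m - 2 * l. \<Prod>i\<in>S. f i))"
    by (intro sum.cong refl) auto
  finally show ?thesis .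
qed


lemma prod_shift1: "(\<Prod>j<m. h (Suc j)) = (\<Prod>i\<in>{1..m}. h i)"
proof -
  have "{1..m} = Suc ` {..<m}" by (simp add: image_Suc_lessThan)
  then show ?thesis by (simp add: prod.reindex)
qed

lemma CT_TT_pow: "fls_nth (TT ^ n) 0 = cb n"
  using CT_pow[of 1 n] by simp

lemma CT_TT2_pow: "fls_nth ((XX ^ 2 + Xi ^ 2) ^ n) 0 = cb n"
  using CT_pow[of 2 n] by simp

lemma middle_fls:
  assumes "\<And>n. fls_nth (T ^ n) 0 = cb n"
  shows "fls_nth (\<Prod>j<m. T - fls_const (x (Suc j) ^ 2 + inverse (x (Suc j) ^ 2))) 0 =
    (-1) ^ m * (\<Sum>l=0..m div 2. of_nat ((2 * l) choose l) *
            (\<Sum>S | S \<subseteq> {1..m} \<and> card S = m - 2 * l.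
               \<Prod>i\<in>S. x i ^ 2 + inverse (x i ^ 2)))"
  unfolding prod_shift1[of "\<lambda>i. T - fls_const (x i ^ 2 + inverse (x i ^ 2))"]
  by (subst CT_prod_lin[OF _ assms]) (auto simp: middle_comb)

lemma second_eq:
  assumes xnz: "\<forall>i\<in>{1..m}. x i \<noteq> 0" and den: "sp_den m (\<lambda>i. x i ^ 2) \<noteq> 0"
  shows "(\<Sum>l=0..m div 2. of_nat ((2 * l) choose l) *
            (\<Sum>S | S \<subseteq> {1..m} \<and> card S = m - 2 * l.
               \<Prod>i\<in>S. x i ^ 2 + inverse (x i ^ 2)))
       = (\<Sum>j=0..m div 2. sp_char m (part1 (m - 2 * j)) (\<lambda>i. x i ^ 2))"
proof -
  define y where "y = (\<lambda>i. x i ^ 2)"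
  have ynz: "\<forall>j\<in>{1..m}. y j \<noteq> 0" using xnz by (simp add: y_def)
  define w where "w = (\<lambda>j. y (Suc j) + inverse (y (Suc j)))"
  define D where "D = AD m (\<lambda>i. m - i) w"
  define A where "A = (\<lambda>k. AD m (\<lambda>i. part1 k (Suc i) + m - i) w)"
  have Dnz: "D \<noteq> 0" using sp_char_AD(2)[OF ynz den[folded y_def]] by (simp add: D_def w_def)
  have chi: "sp_char m (part1 k) y = A k / D" for k
    using sp_char_AD(1)[OF ynz den[folded y_def]] by (simp add: D_def w_def A_def)
  define LP where "LP = (\<Sum>i<Suc m. smult ((-1)^(i+m) * A i) (Pc (Suc m - i)))"
  define RP where "RP = smult ((-1)^m * D) (\<Prod>j<m. [:- w j, 1:])"
  have "poly LP W = poly RP W" for W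
  proof -
    have "poly RP W = AD (Suc m) (\<lambda>i. Suc m - i) (w(m := W))"
      unfolding RP_def AD_factor D_def by (simp add: poly_prod)
    also have "\<dots> = (\<Sum>i<Suc m. (-1)^(i+m) * poly (Pc (Suc m - i)) W *
        AD m (\<lambda>i'. Suc m - (if i' < i then i' else Suc i')) w)"
      by (subst AD_laplace) simp
    also have "\<dots> = poly LP W"
      unfolding LP_def poly_sum
    proof (intro sum.cong refl)
      fix i assume i: "i \<in> {..<Suc m}"
      have "AD m (\<lambda>i'. Suc m - (if i' < i then i' else Suc i')) w = A i"
        unfolding A_def by (rule AD_cong) (auto simp: part1_def)
      then show "(-1)^(i+m) * poly (Pc (Suc m - i)) W * AD m (\<lambda>i'. Suc m - (if i' < i then i' else Suc i')) w =
          poly (smult ((-1)^(i+m) * A i) (Pc (Suc m - i))) W" by simp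
    qed
    finally show ?thesis by simp
  qed
  then have "LP = RP" using poly_eq_poly_eq_iff by blast
  then have "Lam LP = Lam RP" by simp
  moreover have "Lam LP = (\<Sum>l=0..m div 2. A (m - 2 * l))"
  proof -
    have "Lam LP = (\<Sum>i<Suc m. (-1)^(i+m) * A i * (if odd (Suc m - i) then 1 else 0))"
      unfolding LP_def Lam_sum Lam_smult Lam_Pc by simp
    also have "\<dots> = (\<Sum>i\<in>{0..m}. if even (m - i) then A i else 0)"
      by (intro sum.cong) (auto simp: minus_one_power_iff)
    also have "\<dots> = (\<Sum>l=0..m div 2. A (m - 2 * l))" by (rule sum_even_reindex)
    finally show ?thesis .
  qed
  moreover have "Lam RP = D * (\<Sum>l=0..m div 2. of_nat ((2 * l) choose l) *
            (\<Sum>S | S \<subseteq> {1..m} \<and> card S = m - 2 * l.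
               \<Prod>i\<in>S. x i ^ 2 + inverse (x i ^ 2)))"
  proof -
    have "evf TT (\<Prod>j<m. [:- w j, 1:]) = (\<Prod>j<m. TT - fls_const (x (Suc j) ^ 2 + inverse (x (Suc j) ^ 2)))"
      unfolding evf_prod by (intro prod.cong refl) (simp add: w_def y_def flip: fls_const_uminus)
    then show ?thesis unfolding RP_def Lam_smult
      by (simp add: Lam_def middle_fls[OF CT_TT_pow])
  qed
  ultimately have "D * (\<Sum>l=0..m div 2. of_nat ((2 * l) choose l) *
            (\<Sum>S | S \<subseteq> {1..m} \<and> card S = m - 2 * l.
               \<Prod>i\<in>S. x i ^ 2 + inverse (x i ^ 2))) = (\<Sum>l=0..m div 2. A (m - 2 * l))" by simp
  then show ?thesis using Dnz
    by (simp add: chi[unfolded y_def] sum_divide_distrib[symmetric] field_simps)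
qed


lemma TT_subdeg: "fls_subdegree TT = -1"
  by (rule fls_subdegree_eqI) auto

lemma Phi_Pc1: "Phi (Pc 1) = 0"
proof -
  have "fls_subdegree (inverse TT) = 1" using TT_subdeg by simp
  then have "fls_nth (inverse TT) 0 = 0" by (intro fls_eq0_below_subdegree) simp
  then show ?thesis by (simp add: Phi_def divide_inverse)
qed

lemma Phi_Pc_rec: "Phi (Pc (Suc (Suc n))) = Lam (Pc (Suc n)) - Phi (Pc n)"
  using TT_nz by (simp add: Phi_def Lam_def diff_divide_distrib)

lemma Phi_Pc_odd: "Phi (Pc (Suc (2 * r))) = 0"
proof (induction r)
  case 0 then show ?case using Phi_Pc1 by simp
next
  case (Suc r)
  have e: "Suc (2 * Suc r) = Suc (Suc (Suc (2 * r)))" by simp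
  have "Phi (Pc (Suc (2 * Suc r))) = Lam (Pc (Suc (Suc (2 * r)))) - Phi (Pc (Suc (2 * r)))"
    unfolding e by (rule Phi_Pc_rec)
  also have "Lam (Pc (Suc (Suc (2 * r)))) = 0" by (simp only: Lam_Pc) simp
  finally show ?case using Suc by simp
qed

lemma Phi_PcPc_gen: "Phi (Pc a * Pc (a + d)) = (if even d then 0 else hh a (d div 2))"
proof (induction a)
  case 0 then show ?case by (simp add: Phi_def hh_def)
next
  case (Suc a)
  have i1: "Suc a + d = Suc (a + d)" by simp
  have e: "Pc (Suc a) * Pc (Suc a + d) = Pc a * Pc (a + d) + Pc (a + (a + d) + 1)"
    using Pc_prod[of a "a + d"] unfolding i1 .
  have "Phi (Pc (Suc a) * Pc (Suc a + d)) = Phi (Pc a * Pc (a + d)) + Phi (Pc (a + (a + d) + 1))"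
    unfolding e by (rule Phi_add)
  also have "\<dots> = (if even d then 0 else hh (Suc a) (d div 2))"
  proof (cases "even d")
    case True
    then obtain z where z: "d = 2 * z" by (elim evenE)
    have idx: "a + (a + d) + 1 = Suc (2 * (a + z))" using z by simp
    have "Phi (Pc (a + (a + d) + 1)) = 0" unfolding idx by (rule Phi_Pc_odd)
    then show ?thesis using Suc.IH True by simp
  next
    case False
    then obtain z where z: "d = 2 * z + 1" by (elim oddE)
    have "a + (a + d) + 1 = 2 * (a + z + 1)" using z by simp
    then have "Phi (Pc (a + (a + d) + 1)) = (if odd (a + z + 1) then 1 else 0)"
      by (simp only: Phi_Pc_even)
    moreover have "hh a z + (if odd (a + z + 1) then 1 else 0) = hh (Suc a) z"
      unfolding hh_def by (cases "even a"; cases "even z") (auto elim!: evenE oddE simp: algebra_simps)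
    ultimately show ?thesis using Suc.IH False z by simp
  qed
  finally show ?case .
qed


declare Pc.simps(3) [simp del]

definition e2 :: "nat \<Rightarrow> nat \<Rightarrow> nat" where "e2 m i = Suc (Suc m) - i"
definition ins :: "nat \<Rightarrow> nat \<Rightarrow> nat" where "ins q i = (if i < q then i else Suc i)"
definition AA :: "nat \<Rightarrow> (nat \<Rightarrow> complex) \<Rightarrow> nat \<Rightarrow> nat \<Rightarrow> complex" where
  "AA m u q p = AD m (\<lambda>i. e2 m (ins q (ins p i))) u"
definition sg :: "nat \<Rightarrow> nat \<Rightarrow> nat \<Rightarrow> complex" where
  "sg m q p = (-1)^(q + Suc m) * (-1)^(Suc (e2 m q)) * (-1)^(p + m)"
definition FF :: "nat \<Rightarrow> (nat \<Rightarrow> complex) \<Rightarrow> nat \<Rightarrow> nat \<Rightarrow> complex" where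
  "FF m u q p = sg m q p * AA m u q p * Phi (Pc (e2 m q) * Pc (e2 m (ins q p)))"
definition Abz :: "nat \<Rightarrow> (nat \<Rightarrow> complex) \<Rightarrow> nat \<Rightarrow> nat \<Rightarrow> complex" where
  "Abz m u b z = AD m (\<lambda>i. part21 (m - b - 2 * z) (2 * z) (Suc i) + m - i) u"

lemma par_lemma: "(N::nat) + 2 * K = 4 * (m + 1) + b \<Longrightarrow> even N = even b"
  by presburger

lemma neg1_par: "even N = even b \<Longrightarrow> (-1::complex) ^ N = (-1) ^ b"
  by (simp add: minus_one_power_iff)

lemma sg_eq: "sg m q p = (-1) ^ (q + Suc m + Suc (e2 m q) + (p + m))"
  unfolding sg_def by (simp add: power_add)

lemma FF_zero1:
  assumes "q \<le> Suc m" "p < q" "odd (q - 1 - p)"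
  shows "FF m u q p = 0"
proof -
  have "e2 m p = e2 m q + (q - p)" using assms by (simp add: e2_def)
  moreover have "even (q - p)" using assms by presburger
  ultimately have "Phi (Pc (e2 m q) * Pc (e2 m p)) = 0" by (simp add: Phi_PcPc_gen)
  then show ?thesis using assms by (simp add: FF_def ins_def)
qed

lemma FF_zero2:
  assumes "q \<le> p" "p \<le> m" "odd (p - q)"
  shows "FF m u q p = 0"
proof -
  have "e2 m q = e2 m (Suc p) + (Suc p - q)" using assms by (simp add: e2_def)
  moreover have "even (Suc p - q)" using assms by presburger
  ultimately have "Phi (Pc (e2 m (Suc p)) * Pc (e2 m q)) = 0" by (simp add: Phi_PcPc_gen)
  then show ?thesis using assms by (simp add: FF_def ins_def mult.commute)
qed

lemma FF_val1:
  assumes "b \<le> m" "z \<le> (m - b) div 2"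
  shows "FF m u (Suc m - b) (m - b - 2 * z) = of_int (eta2 z b) * Abz m u b z"
proof -
  let ?q = "Suc m - b" and ?p = "m - b - 2 * z"
  have ip: "ins ?q ?p = ?p" using assms by (simp add: ins_def)
  have A: "AA m u ?q ?p = Abz m u b z"
    unfolding AA_def Abz_def by (rule AD_cong) (use assms in \<open>auto simp: e2_def ins_def part21_def\<close>)
  have eqs: "e2 m ?p = Suc b + (2 * z + 1)" "e2 m ?q = Suc b" using assms by (auto simp: e2_def)
  have P: "Phi (Pc (e2 m ?q) * Pc (e2 m ?p)) = hh (Suc b) z"
    unfolding eqs using Phi_PcPc_gen[of "Suc b" "2 * z + 1"] by simp
  have z2: "2 * z \<le> m - b" using assms by simp
  have "(?q + Suc m + Suc (e2 m ?q) + (?p + m)) + 2 * (b + z) = 4 * (m + 1) + b"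
    unfolding eqs using assms z2 by simp
  then have "even (?q + Suc m + Suc (e2 m ?q) + (?p + m)) = even b" by (rule par_lemma)
  then have S: "sg m ?q ?p = (-1) ^ b"
    unfolding sg_eq by (rule neg1_par)
  show ?thesis unfolding FF_def ip A P S eta2_hh by simp
qed

lemma FF_val2:
  assumes "b \<le> m" "z \<le> (m - b) div 2"
  shows "FF m u (m - b - 2 * z) (m - b) = of_int (eta2 z b) * Abz m u b z"
proof -
  let ?q = "m - b - 2 * z" and ?p = "m - b"
  have ip: "ins ?q ?p = Suc ?p" using assms by (simp add: ins_def)
  have A: "AA m u ?q ?p = Abz m u b z"
    unfolding AA_def Abz_def by (rule AD_cong) (use assms in \<open>auto simp: e2_def ins_def part21_def\<close>)
  have eqs: "e2 m ?q = Suc b + (2 * z + 1)" "e2 m (Suc ?p) = Suc b" using assms by (auto simp: e2_def)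
  have P: "Phi (Pc (e2 m ?q) * Pc (e2 m (Suc ?p))) = hh (Suc b) z"
    unfolding eqs mult.commute[of "Pc (Suc b + (2 * z + 1))"]
    using Phi_PcPc_gen[of "Suc b" "2 * z + 1"] by simp
  have z2: "2 * z \<le> m - b" using assms by simp
  have "(?q + Suc m + Suc (e2 m ?q) + (?p + m)) + 2 * b = 4 * (m + 1) + b"
    unfolding eqs using assms z2 by simp
  then have "even (?q + Suc m + Suc (e2 m ?q) + (?p + m)) = even b" by (rule par_lemma)
  then have S: "sg m ?q ?p = (-1) ^ b"
    unfolding sg_eq by (rule neg1_par)
  show ?thesis unfolding FF_def ip A P S eta2_hh by simp
qed


lemma sum_FF:
  "(\<Sum>q<Suc (Suc m). \<Sum>p<Suc m. FF m u q p) =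
     2 * (\<Sum>b=0..m. \<Sum>z=0..(m - b) div 2. of_int (eta2 z b) * Abz m u b z)"
proof -
  define S where "S = (\<Sum>b=0..m. \<Sum>z=0..(m - b) div 2. of_int (eta2 z b) * Abz m u b z)"
  have split: "(\<Sum>p<Suc m. FF m u q p) = (\<Sum>p<q. FF m u q p) + (\<Sum>p\<in>{q..m}. FF m u q p)"
    if "q < Suc (Suc m)" for q
  proof -
    have e: "{..<Suc m} = {..<q} \<union> {q..m}" using that by auto
    have "sum (FF m u q) ({..<q} \<union> {q..m}) = sum (FF m u q) {..<q} + sum (FF m u q) {q..m}"
      by (rule sum.union_disjoint) auto
    then show ?thesis unfolding e .
  qed
  have eq1: "(\<Sum>q<Suc (Suc m). \<Sum>p<Suc m. FF m u q p) =
      (\<Sum>q<Suc (Suc m). \<Sum>p<q. FF m u q p) + (\<Sum>q<Suc (Suc m). \<Sum>p\<in>{q..m}. FF m u q p)"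
    unfolding sum.distrib[symmetric]
  proof (rule sum.cong[OF refl])
    fix q assume "q \<in> {..<Suc (Suc m)}"
    then show "(\<Sum>p<Suc m. FF m u q p) = (\<Sum>p<q. FF m u q p) + (\<Sum>p\<in>{q..m}. FF m u q p)"
      by (intro split) simp
  qed
  have H1: "(\<Sum>q<Suc (Suc m). \<Sum>p<q. FF m u q p) = S"
  proof -
    have inner: "(\<Sum>p<Suc q. FF m u (Suc q) p) = (\<Sum>z=0..q div 2. FF m u (Suc q) (q - 2 * z))"
      if "q \<le> m" for q
    proof -
      have "(\<Sum>p<Suc q. FF m u (Suc q) p) = (\<Sum>p\<in>{0..q}. if even (q - p) then FF m u (Suc q) p else 0)"
      proof (rule sum.cong)
        fix p assume p: "p \<in> {0..q}"
        show "FF m u (Suc q) p = (if even (q - p) then FF m u (Suc q) p else 0)"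
        proof (cases "even (q - p)")
          case False
          have "FF m u (Suc q) p = 0" by (rule FF_zero1) (use that p False in auto)
          then show ?thesis by simp
        qed simp
      qed auto
      also have "\<dots> = (\<Sum>z=0..q div 2. FF m u (Suc q) (q - 2 * z))" by (rule sum_even_reindex)
      finally show ?thesis .
    qed
    have "(\<Sum>q<Suc (Suc m). \<Sum>p<q. FF m u q p) = (\<Sum>q<Suc m. \<Sum>p<Suc q. FF m u (Suc q) p)"
      by (subst sum.lessThan_Suc_shift) simp
    also have "\<dots> = (\<Sum>q\<in>{0..m}. \<Sum>z=0..q div 2. FF m u (Suc q) (q - 2 * z))"
    proof (rule sum.cong)
      show "{..<Suc m} = {0..m}" by auto
    next
      fix q assume "q \<in> {0..m}"
      then show "(\<Sum>p<Suc q. FF m u (Suc q) p) = (\<Sum>z=0..q div 2. FF m u (Suc q) (q - 2 * z))"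
        by (intro inner) simp
    qed
    also have "\<dots> = (\<Sum>b\<in>{0..m}. \<Sum>z=0..(m - b) div 2. FF m u (Suc (m - b)) (m - b - 2 * z))"
      by (subst sum.atLeastAtMost_rev) simp
    also have "\<dots> = S" unfolding S_def
    proof (intro sum.cong refl)
      fix b z assume b: "b \<in> {0..m}" and z: "z \<in> {0..(m - b) div 2}"
      have "Suc (m - b) = Suc m - b" using b by simp
      then show "FF m u (Suc (m - b)) (m - b - 2 * z) = of_int (eta2 z b) * Abz m u b z"
        using FF_val1[of b m z u] b z by simp
    qed
    finally show ?thesis .
  qed
  have H2: "(\<Sum>q<Suc (Suc m). \<Sum>p\<in>{q..m}. FF m u q p) = S"
  proof -
    have "(\<Sum>q<Suc (Suc m). \<Sum>p\<in>{q..m}. FF m u q p) =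
        (\<Sum>q\<in>{..<Suc (Suc m)}. \<Sum>p\<in>{p. p \<in> {0..m} \<and> q \<le> p}. FF m u q p)"
    proof (intro sum.cong refl)
      fix q show "{q..m} = {p. p \<in> {0..m} \<and> q \<le> p}" by auto
    qed
    also have "\<dots> = (\<Sum>p\<in>{0..m}. \<Sum>q\<in>{q. q \<in> {..<Suc (Suc m)} \<and> q \<le> p}. FF m u q p)"
      by (rule sum.swap_restrict) auto
    also have "\<dots> = (\<Sum>p\<in>{0..m}. \<Sum>q\<in>{0..p}. if even (p - q) then FF m u q p else 0)"
    proof (intro sum.cong refl)
      fix p assume p: "p \<in> {0..m}"
      show "{q. q \<in> {..<Suc (Suc m)} \<and> q \<le> p} = {0..p}" using p by auto
      fix q assume q: "q \<in> {0..p}"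
      show "FF m u q p = (if even (p - q) then FF m u q p else 0)"
      proof (cases "even (p - q)")
        case False
        have "FF m u q p = 0" by (rule FF_zero2) (use p q False in auto)
        then show ?thesis by simp
      qed simp
    qed
    also have "\<dots> = (\<Sum>p\<in>{0..m}. \<Sum>z=0..p div 2. FF m u (p - 2 * z) p)"
      by (rule sum.cong[OF refl], rule sum_even_reindex)
    also have "\<dots> = (\<Sum>b\<in>{0..m}. \<Sum>z=0..(m - b) div 2. FF m u (m - b - 2 * z) (m - b))"
      by (subst sum.atLeastAtMost_rev) simp
    also have "\<dots> = S" unfolding S_def
    proof (intro sum.cong refl)
      fix b z assume b: "b \<in> {0..m}" and z: "z \<in> {0..(m - b) div 2}"
      then show "FF m u (m - b - 2 * z) (m - b) = of_int (eta2 z b) * Abz m u b z"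
        using FF_val2[of b m z u] by simp
    qed
    finally show ?thesis .
  qed
  have "(\<Sum>q<Suc (Suc m). \<Sum>p<Suc m. FF m u q p) = S + S"
    using eq1 H1 H2 by (simp only:)
  then show ?thesis unfolding S_def by (simp only: mult_2)
qed


lemma AD_laplace_ins:
  "AD (Suc k) \<alpha> z = (\<Sum>i<Suc k. (-1)^(i+k) * poly (Pc (\<alpha> i)) (z k) * AD k (\<lambda>i'. \<alpha> (ins i i')) z)"
  unfolding ins_def by (rule AD_laplace)

lemma evf_quad: "evf TT [:c, 0, -1:] = - ((XX ^ 2 + Xi ^ 2) - fls_const (c - 2))"
proof -
  have "evf TT [:c, 0, -1:] = fls_const c - TT * TT" by (simp add: fls_const_uminus) (simp add: algebra_simps)
  also have "TT * TT = XX ^ 2 + Xi ^ 2 + 2 * (XX * Xi)" by (simp add: algebra_simps power2_eq_square)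
  also have "\<dots> = XX ^ 2 + Xi ^ 2 + fls_const 2" by (simp add: XXi fls_of_nat[of 2, simplified] numeral_2_eq_2 flip: fls_const_1)
  finally show ?thesis by (simp add: fls_minus_const[symmetric] algebra_simps)
qed

lemma prod_neg: "(\<Prod>j\<in>A. - (f j :: 'a :: comm_ring_1)) = (-1) ^ card A * (\<Prod>j\<in>A. f j)"
proof -
  have "(\<Prod>j\<in>A. - f j) = (\<Prod>j\<in>A. (-1) * f j)" by simp
  also have "\<dots> = (\<Prod>j\<in>A. -1) * (\<Prod>j\<in>A. f j)" by (rule prod.distrib)
  finally show ?thesis by simp
qed

lemma first_eq:
  assumes xnz: "\<forall>i\<in>{1..m}. x i \<noteq> 0" and den: "sp_den m x \<noteq> 0"
  shows "(\<Sum>b=0..m. \<Sum>z=0..(m - b) div 2.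
            of_int (eta2 z b) * sp_char m (part21 (m - b - 2 * z) (2 * z)) x)
       = (\<Sum>l=0..m div 2. of_nat ((2 * l) choose l) *
            (\<Sum>S | S \<subseteq> {1..m} \<and> card S = m - 2 * l.
               \<Prod>i\<in>S. x i ^ 2 + inverse (x i ^ 2)))"
proof -
  define u where "u = (\<lambda>j. x (Suc j) + inverse (x (Suc j)))"
  define D where "D = AD m (\<lambda>i. m - i) u"
  define MID where "MID = (\<Sum>l=0..m div 2. of_nat ((2 * l) choose l) *
            (\<Sum>S | S \<subseteq> {1..m} \<and> card S = m - 2 * l.
               \<Prod>i\<in>S. x i ^ 2 + inverse (x i ^ 2)))"
  have Dnz: "D \<noteq> 0" using sp_char_AD(2)[OF xnz den] by (simp add: D_def u_def)
  have chi: "sp_char m (part21 (m - b - 2 * z) (2 * z)) x = Abz m u b z / D" for b z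
    using sp_char_AD(1)[OF xnz den] by (simp add: D_def u_def Abz_def)
  define LP where "LP = (\<Sum>q<Suc (Suc m). \<Sum>p<Suc m. smult (sg m q p * AA m u q p)
      (Pc (e2 m q) * Pc (e2 m (ins q p))))"
  define RP where "RP = smult (2 * D) ([:0,1:] * (\<Prod>j<m. [:u j ^ 2, 0, -1:]))"
  have e2eq: "e2 m = (\<lambda>i. Suc (Suc m) - i)" by (simp add: e2_def fun_eq_iff)
  have "poly LP v = poly RP v" for v
  proof -
    define Z where "Z = (u(m := v))(Suc m := - v)"
    have "AD (Suc (Suc m)) (e2 m) Z = (-1) ^ Suc m * AD (Suc m) (\<lambda>i. Suc m - i) (u(m := v)) *
        (\<Prod>j<Suc m. - v - (u(m := v)) j)"
      unfolding e2eq Z_def by (rule AD_factor)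
    also have "AD (Suc m) (\<lambda>i. Suc m - i) (u(m := v)) = (-1) ^ m * D * (\<Prod>j<m. v - u j)"
      unfolding D_def by (rule AD_factor)
    also have "(\<Prod>j<Suc m. - v - (u(m := v)) j) = (\<Prod>j<m. - v - u j) * (- v - v)"
      by (simp add: prod.lessThan_Suc)
    also have "(-1) ^ Suc m * ((-1) ^ m * D * (\<Prod>j<m. v - u j)) * ((\<Prod>j<m. - v - u j) * (- v - v))
        = 2 * D * (v * ((\<Prod>j<m. v - u j) * (\<Prod>j<m. - v - u j)))"
    proof -
      have "(-1::complex) ^ Suc m * (-1) ^ m = -1"
        by (simp flip: power_add)
      then show ?thesis by (simp add: algebra_simps)
    qed
    also have "(\<Prod>j<m. v - u j) * (\<Prod>j<m. - v - u j) = (\<Prod>j<m. u j ^ 2 - v * v)"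
      by (subst prod.distrib[symmetric]) (intro prod.cong refl, simp add: algebra_simps power2_eq_square)
    also have "2 * D * (v * (\<Prod>j<m. u j ^ 2 - v * v)) = poly RP v"
      unfolding RP_def by (simp add: poly_prod algebra_simps)
    finally have R: "AD (Suc (Suc m)) (e2 m) Z = poly RP v" .
    have "AD (Suc (Suc m)) (e2 m) Z = (\<Sum>q<Suc (Suc m). (-1)^(q + Suc m) * poly (Pc (e2 m q)) (- v) *
         AD (Suc m) (\<lambda>i. e2 m (ins q i)) (u(m := v)))"
      by (subst AD_laplace_ins) (simp add: Z_def)
    also have "\<dots> = (\<Sum>q<Suc (Suc m). (-1)^(q + Suc m) * ((-1) ^ Suc (e2 m q) * poly (Pc (e2 m q)) v) *
         (\<Sum>p<Suc m. (-1)^(p + m) * poly (Pc (e2 m (ins q p))) v * AA m u q p))"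
    proof (intro sum.cong refl)
      fix q
      show "(-1)^(q + Suc m) * poly (Pc (e2 m q)) (- v) * AD (Suc m) (\<lambda>i. e2 m (ins q i)) (u(m := v)) =
        (-1)^(q + Suc m) * ((-1) ^ Suc (e2 m q) * poly (Pc (e2 m q)) v) *
         (\<Sum>p<Suc m. (-1)^(p + m) * poly (Pc (e2 m (ins q p))) v * AA m u q p)"
        by (subst AD_laplace_ins) (simp add: Pc_neg AA_def)
    qed
    also have "\<dots> = poly LP v"
      unfolding LP_def poly_sum sum_distrib_left
      by (intro sum.cong refl) (simp add: sg_def poly_smult algebra_simps)
    finally show ?thesis using R by simp
  qed
  then have "LP = RP" using poly_eq_poly_eq_iff by blast
  then have PE: "Phi LP = Phi RP" by simp
  have "Phi LP = (\<Sum>q<Suc (Suc m). \<Sum>p<Suc m. FF m u q p)"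
    unfolding LP_def Phi_sum Phi_smult FF_def by (simp add: mult.assoc)
  also have "\<dots> = 2 * (\<Sum>b=0..m. \<Sum>z=0..(m - b) div 2. of_int (eta2 z b) * Abz m u b z)"
    by (rule sum_FF)
  finally have PL: "Phi LP = 2 * (\<Sum>b=0..m. \<Sum>z=0..(m - b) div 2. of_int (eta2 z b) * Abz m u b z)" .
  have "Lam (\<Prod>j<m. [:u j ^ 2, 0, -1:]) = MID"
  proof -
    have "evf TT (\<Prod>j<m. [:u j ^ 2, 0, -1:]) =
        (\<Prod>j<m. - ((XX ^ 2 + Xi ^ 2) - fls_const (x (Suc j) ^ 2 + inverse (x (Suc j) ^ 2))))"
    proof (unfold evf_prod, intro prod.cong refl)
      fix j assume "j \<in> {..<m}"
      then have "x (Suc j) \<noteq> 0" using xnz by auto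
      then have eq: "u j ^ 2 - 2 = x (Suc j) ^ 2 + inverse (x (Suc j) ^ 2)"
        unfolding u_def by (simp add: field_simps power2_eq_square)
      show "evf TT [:u j ^ 2, 0, -1:] = - ((XX ^ 2 + Xi ^ 2) - fls_const (x (Suc j) ^ 2 + inverse (x (Suc j) ^ 2)))"
        unfolding evf_quad eq by (rule refl)
    qed
    also have "\<dots> = (-1) ^ m * (\<Prod>j<m. (XX ^ 2 + Xi ^ 2) - fls_const (x (Suc j) ^ 2 + inverse (x (Suc j) ^ 2)))"
      by (simp only: prod_neg card_lessThan)
    finally have E: "evf TT (\<Prod>j<m. [:u j ^ 2, 0, -1:]) = (-1) ^ m *
      (\<Prod>j<m. (XX ^ 2 + Xi ^ 2) - fls_const (x (Suc j) ^ 2 + inverse (x (Suc j) ^ 2)))" .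
    have c: "((-1)::complex fls) ^ m = fls_const ((-1) ^ m)"
      by (induction m) (simp_all add: fls_const_mult_const[symmetric])
    have "Lam (\<Prod>j<m. [:u j ^ 2, 0, -1:]) = (-1) ^ m * fls_nth
      (\<Prod>j<m. (XX ^ 2 + Xi ^ 2) - fls_const (x (Suc j) ^ 2 + inverse (x (Suc j) ^ 2))) 0"
      unfolding Lam_def E c by (rule fls_mult_const_nth)
    also have "\<dots> = (-1) ^ m * ((-1) ^ m * MID)"
      unfolding MID_def by (subst middle_fls[OF CT_TT2_pow]) (rule refl)
    also have "\<dots> = MID" by (simp flip: power_add)
    finally show ?thesis .
  qed
  then have PR: "Phi RP = 2 * D * MID"
    unfolding RP_def Phi_smult Phi_X by simp
  have "(\<Sum>b=0..m. \<Sum>z=0..(m - b) div 2. of_int (eta2 z b) * Abz m u b z) = D * MID"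
    using PE PL PR by simp
  then have "(\<Sum>b=0..m. \<Sum>z=0..(m - b) div 2. of_int (eta2 z b) * Abz m u b z) / D = MID"
    using Dnz by simp
  moreover have "(\<Sum>b=0..m. \<Sum>z=0..(m - b) div 2. of_int (eta2 z b) * Abz m u b z) / D =
      (\<Sum>b=0..m. \<Sum>z=0..(m - b) div 2. of_int (eta2 z b) * (Abz m u b z / D))"
    by (simp add: sum_divide_distrib)
  ultimately show ?thesis unfolding MID_def[symmetric] chi by simp
qed


theorem mainTheorem5:
  fixes m :: nat and x :: "nat \<Rightarrow> complex"
  assumes "m \<ge> 1"
    and "\<forall>i\<in>{1..m}. x i \<noteq> 0"
    and "sp_den m x \<noteq> 0"
    and "sp_den m (\<lambda>i. x i ^ 2) \<noteq> 0"
  shows "(\<Sum>b=0..m. \<Sum>z=0..(m - b) div 2.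
            of_int (eta2 z b) * sp_char m (part21 (m - b - 2 * z) (2 * z)) x)
       = (\<Sum>l=0..m div 2. of_nat ((2 * l) choose l) *
            (\<Sum>S | S \<subseteq> {1..m} \<and> card S = m - 2 * l.
               \<Prod>i\<in>S. x i ^ 2 + inverse (x i ^ 2)))
     \<and> (\<Sum>l=0..m div 2. of_nat ((2 * l) choose l) *
            (\<Sum>S | S \<subseteq> {1..m} \<and> card S = m - 2 * l.
               \<Prod>i\<in>S. x i ^ 2 + inverse (x i ^ 2)))
       = (\<Sum>j=0..m div 2. sp_char m (part1 (m - 2 * j)) (\<lambda>i. x i ^ 2))"
  using first_eq[OF assms(2,3)] second_eq[OF assms(2,4)] by simp

end
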